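(* Let $s\in(0,1)$ and suppose the jump kernels $j_1^{(n)}$ satisfy the upper bound with this $s$. Then for every $u\in\operatorname{Lip}([0,1])$, $\widetilde{\mathcal{E}}_1^{(\infty)}(u)=\mathcal{E}_1^{(\infty)}(u)$.
   Context: Index graph: vertices $\mathbb{N}$; vertex $i$ has edges $e_{i,2i-2}$ to $2i-2$ (only if $i\ge2$), $e_{i,2i-1},e'_{i,2i-1}$ to $2i-1$, $e_{i,2i}$ to $2i$, weights $r_e>0$ with $r_{e_{i,2i-1}}=r_{e'_{i,2i-1}}$. For $e$ from $i$ to $j$, $\phi_e(x)=\frac{j}{2i}x+s_e$, $s_e=0$ for $e\in\{e_{i,2i-1},e_{i,2i}\}$, $s_e=\frac1{2i}$ for $e\in\{e_{i,2i-2},e'_{i,2i-1}\}$. $E_1^{(n)}$: paths $\sigma=e_1\cdots e_n$ of length $n$ from vertex $1$; $\phi_\sigma=\phi_{e_1}\circ\cdots\circ\phi_{e_n}$, $\delta_\sigma=r_{e_1}\cdots r_{e_n}$. $V_1^{(n)}=\{k/2^n\}_{k=0}^{2^n}$; the wires $\{\phi_\sigma(0),\phi_\sigma(1)\}$, $\sigma\in E_1^{(n)}$, are all pairs of distinct points of $V_1^{(n)}$, each with a unique path $\sigma^{(n)}_{x,y}$. $U_1^{(n)}(x)=[x-2^{-n-1},x+2^{-n-1})\cap[0,1]$, $\mu_1^{(n)}(x)=|U_1^{(n)}(x)|$. Kernel $j_1^{(n)}(x,y)=(\delta_{\sigma^{(n)}_{x,y}}\mu_1^{(n)}(x)\mu_1^{(n)}(y))^{-1}$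 for $x\ne y$, $0$ for $x=y$. $\mathcal{E}_1^{(n)}(u)=\sum_{x,y\in V_1^{(n)}}(u(x)-u(y))^2j_1^{(n)}(x,y)\mu_1^{(n)}(x)\mu_1^{(n)}(y)$. Upper bound: there is $\Lambda_1>0$ with $0<j_1^{(n)}(x,y)\le\Lambda_1|x-y|^{-1-2s}$ for all $n\ge0$ and distinct $x,y\in V_1^{(n)}$. $\mathcal{E}_1^{(\infty)}(u)=\lim_n\mathcal{E}_1^{(n)}(u|_{V_1^{(n)}})$; $\operatorname{Avg}_1^{(n)}u(\bar x)=\frac1{|U_1^{(n)}(\bar x)|}\int_{U_1^{(n)}(\bar x)}u\,dx$; $\widetilde{\mathcal{E}}_1^{(\infty)}(u)=\lim_n\mathcal{E}_1^{(n)}(\operatorname{Avg}_1^{(n)}u)$. *)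

theory Defs
  imports "HOL-Analysis.Analysis"
begin

text \<open>Edges out of vertex i are labelled by k :: nat with k \<le> 3:
  k = 0: e_{i,2i-2} (only if i \<ge> 2);  k = 1: e_{i,2i-1};  k = 2: e'_{i,2i-1};  k = 3: e_{i,2i}.\<close>

definition edge_ok :: "nat \<Rightarrow> nat \<Rightarrow> bool" where
  "edge_ok i k \<longleftrightarrow> k \<le> 3 \<and> (k = 0 \<longrightarrow> i \<ge> 2)"

definition tgt :: "nat \<Rightarrow> nat \<Rightarrow> nat" where
  "tgt i k = (if k = 0 then 2*i - 2 else if k = 3 then 2*i else 2*i - 1)"

definition shift :: "nat \<Rightarrow> nat \<Rightarrow> real" where
  "shift i k = (if k = 0 \<or> k = 2 then 1 / (2 * real i) else 0)"

definition phi_e :: "nat \<Rightarrow> nat \<Rightarrow> real \<Rightarrow> real" where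
  "phi_e i k x = real (tgt i k) / (2 * real i) * x + shift i k"

fun valid_path :: "nat \<Rightarrow> nat list \<Rightarrow> bool" where
  "valid_path i [] = True"
| "valid_path i (k # ks) = (edge_ok i k \<and> valid_path (tgt i k) ks)"

fun phi_path :: "nat \<Rightarrow> nat list \<Rightarrow> real \<Rightarrow> real" where
  "phi_path i [] x = x"
| "phi_path i (k # ks) x = phi_e i k (phi_path (tgt i k) ks x)"

fun delta :: "(nat \<Rightarrow> nat \<Rightarrow> real) \<Rightarrow> nat \<Rightarrow> nat list \<Rightarrow> real" where
  "delta r i [] = 1"
| "delta r i (k # ks) = r i k * delta r (tgt i k) ks"

definition paths1 :: "nat \<Rightarrow> nat list set" where
  "paths1 n = {ks. length ks = n \<and> valid_path 1 ks}"

definition V1 :: "nat \<Rightarrow> real set" where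
  "V1 n = (\<lambda>k. real k / 2 ^ n) ` {0..2 ^ n}"

definition sigma1 :: "nat \<Rightarrow> real \<Rightarrow> real \<Rightarrow> nat list" where
  "sigma1 n x y = (THE \<sigma>. \<sigma> \<in> paths1 n \<and> {phi_path 1 \<sigma> 0, phi_path 1 \<sigma> 1} = {x, y})"

definition U1 :: "nat \<Rightarrow> real \<Rightarrow> real set" where
  "U1 n x = {x - 1 / 2 ^ (n+1) ..< x + 1 / 2 ^ (n+1)} \<inter> {0..1}"

definition mu1 :: "nat \<Rightarrow> real \<Rightarrow> real" where
  "mu1 n x = measure lborel (U1 n x)"

definition j1 :: "(nat \<Rightarrow> nat \<Rightarrow> real) \<Rightarrow> nat \<Rightarrow> real \<Rightarrow> real \<Rightarrow> real" where
  "j1 r n x y = (if x = y then 0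
      else 1 / (delta r 1 (sigma1 n x y) * mu1 n x * mu1 n y))"

definition energy1 :: "(nat \<Rightarrow> nat \<Rightarrow> real) \<Rightarrow> nat \<Rightarrow> (real \<Rightarrow> real) \<Rightarrow> real" where
  "energy1 r n u = (\<Sum>x\<in>V1 n. \<Sum>y\<in>V1 n. (u x - u y)^2 * j1 r n x y * mu1 n x * mu1 n y)"

definition avg1 :: "nat \<Rightarrow> (real \<Rightarrow> real) \<Rightarrow> real \<Rightarrow> real" where
  "avg1 n u x = integral (U1 n x) u / measure lborel (U1 n x)"

end

theory Submission
  imports Defs
begin

lemma U1_facts:
  fixes x :: real
  shows "U1 n x \<in> sets lborel" "U1 n x \<subseteq> {0..1}"
    "U1 n x \<subseteq> {x - 1/2^(n+1) .. x + 1/2^(n+1)}"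
  unfolding U1_def by auto

lemma mu1_le: "mu1 n x \<le> 1 / 2^n" and mu1_ge: "0 \<le> mu1 n x"
proof -
  have "mu1 n x \<le> measure lborel {x - 1/2^(n+1) .. x + 1/2^(n+1)}"
    unfolding mu1_def
    by (rule measure_mono_fmeasurable[OF U1_facts(3) U1_facts(1)]) (metis cbox_interval fmeasurable_cbox)
  also have "\<dots> = 1/2^n"
    by (simp add: measure_def)
  finally show "mu1 n x \<le> 1 / 2^n" .
  show "0 \<le> mu1 n x" unfolding mu1_def by simp
qed

lemma mu1_pos: assumes "x \<in> {0..1::real}" shows "0 < mu1 n x"
proof -
  define h :: real where "h = 1/2^(n+1)"
  have h: "0 < h" "h \<le> 1/2" unfolding h_def by (auto simp: field_simps)
  have U: "U1 n x = {x - h ..< x + h} \<inter> {0..1}" unfolding U1_def h_def by simp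
  obtain a b where ab: "a < b" "{a..b} \<subseteq> U1 n x"
  proof (cases "x \<le> 1/2")
    case True
    show ?thesis by (rule that[of x "x + h/2"]) (use h True assms in \<open>auto simp: U\<close>)
  next
    case False
    show ?thesis by (rule that[of "x - h/2" x]) (use h False assms in \<open>auto simp: U\<close>)
  qed
  have fm: "U1 n x \<in> fmeasurable lborel"
    by (rule fmeasurableI2[OF _ U1_facts(3) U1_facts(1)]) (metis cbox_interval fmeasurable_cbox)
  have "b - a = measure lborel {a..b}" using ab by (simp add: measure_def)
  also have "\<dots> \<le> mu1 n x" unfolding mu1_def
    by (rule measure_mono_fmeasurable[OF ab(2) _ fm]) simp
  finally show ?thesis using ab by simp
qed

lemma avg_bound:
  assumes lip: "lipschitz_on L {0..1} u" and x: "x \<in> {0..1::real}"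
  shows "\<bar>avg1 n u x - u x\<bar> \<le> L / 2^n"
proof -
  define U where "U = U1 n x"
  define h :: real where "h = 1/2^(n+1)"
  have L0: "0 \<le> L" using lip by (simp add: lipschitz_on_def)
  have Ulm: "U \<in> lmeasurable"
    unfolding U_def by (rule bounded_set_imp_lmeasurable)
      (auto intro: bounded_subset[OF bounded_cbox[of 0 1]] simp: U1_def)
  have mU: "measure lborel U = measure lebesgue U"
    using U1_facts(1) unfolding U_def by simp
  have mpos: "0 < measure lborel U" using mu1_pos[OF x] unfolding mu1_def U_def .
  have cont: "continuous_on {0..1} u" using lip lipschitz_on_continuous_on by blast
  have "set_integrable lebesgue {0..1} u"
    using absolutely_integrable_continuous_real[OF cont] .
  then have "set_integrable lebesgue U u"
    by (rule set_integrable_subset) (use Ulm U1_facts(2) in \<open>auto simp: U_def\<close>)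
  then have iu: "u integrable_on U" by (rule set_lebesgue_integral_eq_integral(1))
  have ic: "(\<lambda>t. c) integrable_on U" for c :: real using integrable_on_const[OF Ulm] .
  have i1: "integral U (\<lambda>t. 1::real) = measure lborel U" using lmeasure_integral[OF Ulm] mU by simp
  have ic2: "integral U (\<lambda>t. c) = c * measure lborel U" for c :: real
    using integral_cmul[of U c "\<lambda>t. 1::real"] i1 by simp
  have dist: "\<bar>u t - u x\<bar> \<le> L * h" if "t \<in> U" for t
  proof -
    have t: "t \<in> {0..1}" "\<bar>t - x\<bar> \<le> h" using that U1_facts(2,3)[of n x]
      unfolding U_def h_def by (auto simp: abs_le_iff)
    have "\<bar>u t - u x\<bar> \<le> L * \<bar>t - x\<bar>"
      using lip t(1) x unfolding lipschitz_on_def dist_real_def by blast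
    also have "\<dots> \<le> L * h" using t(2) L0 by (simp add: mult_left_mono)
    finally show ?thesis .
  qed
  have "norm (integral U (\<lambda>t. u t - u x)) \<le> integral U (\<lambda>t. L * h)"
    by (rule integral_norm_bound_integral) (use iu ic dist in \<open>auto intro: integrable_diff\<close>)
  moreover have "integral U (\<lambda>t. u t - u x) = integral U u - u x * measure lborel U"
    using integral_diff[OF iu ic[of "u x"]] ic2 by simp
  ultimately have a: "\<bar>integral U u - u x * measure lborel U\<bar> \<le> L * h * measure lborel U"
    using ic2 by (simp add: mult_ac)
  have "\<bar>integral U u / measure lborel U - u x\<bar> \<le> L * h"
  proof -
    have "integral U u / measure lborel U - u x = (integral U u - u x * measure lborel U) / measure lborel U"
      using mpos by (simp add: field_simps)
    then show ?thesis using mpos a by (simp add: abs_divide pos_divide_le_eq)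
  qed
  moreover have "L * h \<le> L / 2^n" using L0 unfolding h_def by (simp add: field_simps)
  ultimately show ?thesis unfolding avg1_def U_def by simp
qed

lemma term_bound:
  fixes a b J mx my d L Lam s N :: real
  assumes L0: "0 \<le> L" and s: "0 < s" "s < 1" and N: "N \<ge> 1" and d: "1/N \<le> d" "d \<le> 1"
    and ha: "\<bar>a\<bar> \<le> L*d" and hb: "\<bar>b - a\<bar> \<le> 2*L/N"
    and J: "0 < J" "J \<le> Lam * d powr (- 1 - 2 * s)"
    and m: "0 \<le> mx" "mx \<le> 1/N" "0 \<le> my" "my \<le> 1/N"
  shows "\<bar>(b^2 - a^2) * J * mx * my\<bar> \<le> 8*L^2*Lam / N^3 * d powr (-(s+1))"
proof -
  have dpos: "0 < d" using d N by (smt (verit) divide_pos_pos)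
  have "\<bar>b + a\<bar> \<le> \<bar>b - a\<bar> + 2*\<bar>a\<bar>" by simp
  also have "\<dots> \<le> 2*L/N + 2*(L*d)" using hb ha by simp
  also have "\<dots> \<le> 4*L*d"
  proof -
    have "L/N \<le> L*d" using mult_left_mono[OF d(1) L0] by simp
    then show ?thesis by simp
  qed
  finally have bpa: "\<bar>b + a\<bar> \<le> 4*L*d" .
  have sq: "\<bar>b^2 - a^2\<bar> \<le> (2*L/N) * (4*L*d)"
  proof -
    have "\<bar>b^2 - a^2\<bar> = \<bar>b - a\<bar> * \<bar>b + a\<bar>"
      by (simp add: power2_eq_square abs_mult[symmetric] algebra_simps)
    also have "\<dots> \<le> (2*L/N) * (4*L*d)" by (rule mult_mono[OF hb bpa]) (use L0 N in auto)
    finally show ?thesis .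
  qed
  have Lam0: "Lam \<ge> 0"
  proof -
    have "0 < Lam * d powr (- 1 - 2 * s)" using J by linarith
    moreover have "0 < d powr (- 1 - 2 * s)" using dpos by simp
    ultimately show ?thesis by (simp add: zero_less_mult_iff)
  qed
  have Jm: "J * mx * my \<le> Lam * d powr (- 1 - 2 * s) * (1/N) * (1/N)"
    using J m Lam0 N by (intro mult_mono) auto
  have Jm0: "0 \<le> J * mx * my" using J m by simp
  have "\<bar>(b^2 - a^2) * J * mx * my\<bar> = \<bar>b^2 - a^2\<bar> * (J * mx * my)"
    using Jm0 abs_mult[of "b^2 - a^2" "J * mx * my"] by (simp add: mult_ac)
  also have "\<dots> \<le> ((2*L/N) * (4*L*d)) * (Lam * d powr (- 1 - 2 * s) * (1/N) * (1/N))"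
    by (rule mult_mono[OF sq Jm]) (use L0 N dpos Jm0 in auto)
  also have "\<dots> = 8*L^2*Lam / N^3 * (d * d powr (- 1 - 2 * s))"
    by (simp add: power2_eq_square power3_eq_cube field_simps)
  also have "d * d powr (- 1 - 2 * s) = d powr (- 2 * s)"
    using dpos by (simp add: powr_add[symmetric] powr_mult_base)
  finally have h: "\<bar>(b^2 - a^2) * J * mx * my\<bar> \<le> 8*L^2*Lam / N^3 * d powr (- 2 * s)" .
  have p: "d powr (- 2 * s) \<le> d powr (-(s+1))"
    by (rule powr_mono') (use s dpos d in auto)
  have "8 * L^2 * Lam / N ^ 3 \<ge> 0" using N Lam0 by simp
  from mult_left_mono[OF p this] h show ?thesis by linarith
qed

lemma row_sum:
  fixes f :: "nat \<Rightarrow> real"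
  assumes sf: "summable f" and f0: "\<And>k. 0 \<le> f k"
  shows "(\<Sum>j\<in>{0..M}. f ((i - j) + (j - i))) \<le> 2 * suminf f"
proof -
  have "(\<Sum>j\<in>{0..M}. f ((i - j) + (j - i))) \<le> (\<Sum>j\<in>{..i} \<union> {i<..M}. f ((i - j) + (j - i)))"
    by (rule sum_mono2) (auto simp: f0)
  also have "\<dots> = (\<Sum>j\<in>{..i}. f ((i - j) + (j - i))) + (\<Sum>j\<in>{i<..M}. f ((i - j) + (j - i)))"
    by (rule sum.union_disjoint) auto
  also have "(\<Sum>j\<in>{..i}. f ((i - j) + (j - i))) = (\<Sum>j\<in>{..i}. f (i - j))"
    by (rule sum.cong) auto
  also have "\<dots> = sum f ((\<lambda>j. i - j) ` {..i})"
    by (subst sum.reindex) (auto simp: inj_on_def)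
  also have "\<dots> \<le> suminf f" by (rule sum_le_suminf[OF sf]) (auto simp: f0)
  also have "(\<Sum>j\<in>{i<..M}. f ((i - j) + (j - i))) = (\<Sum>j\<in>{i<..M}. f (j - i))"
    by (rule sum.cong) auto
  also have "\<dots> = sum f ((\<lambda>j. j - i) ` {i<..M})"
    by (subst sum.reindex) (auto simp: inj_on_def)
  also have "\<dots> \<le> suminf f" by (rule sum_le_suminf[OF sf]) (auto simp: f0)
  finally show ?thesis by simp
qed

lemma energy_reindex:
  "energy1 r n w = (\<Sum>i\<in>{0..2^n}. \<Sum>j\<in>{0..2^n}.
     (w (real i / 2^n) - w (real j / 2^n))^2 * j1 r n (real i / 2^n) (real j / 2^n)
       * mu1 n (real i / 2^n) * mu1 n (real j / 2^n))"
proof -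
  have inj: "inj_on (\<lambda>k. real k / 2 ^ n :: real) {0..2^n}" by (auto simp: inj_on_def)
  show ?thesis unfolding energy1_def V1_def
    by (simp add: sum.reindex[OF inj])
qed

lemma diff_bound:
  fixes L Lam s :: real
  assumes lip: "lipschitz_on L {0..1} u" and s: "0 < s" "s < 1"
    and up: "\<And>x y. x \<in> V1 n \<Longrightarrow> y \<in> V1 n \<Longrightarrow> x \<noteq> y \<Longrightarrow>
                   0 < j1 r n x y \<and> j1 r n x y \<le> Lam * (abs (x - y) powr (- 1 - 2 * s))"
  shows "\<bar>energy1 r n (avg1 n u) - energy1 r n u\<bar> \<le>
     8*L^2*Lam / (2^n)^3 * (2^n) powr (s+1) * ((2^n + 1) * (2 * suminf (\<lambda>k. real k powr (-(s+1)))))"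
proof -
  define N :: real where "N = 2^n"
  define p where "p = (\<lambda>i::nat. real i / N)"
  define v where "v = avg1 n u"
  define f where "f = (\<lambda>k::nat. real k powr (-(s+1)))"
  define C where "C = 8*L^2*Lam / N^3 * N powr (s+1)"
  have N1: "N \<ge> 1" unfolding N_def by simp
  have L0: "0 \<le> L" using lip by (simp add: lipschitz_on_def)
  have sf: "summable f" unfolding f_def using summable_real_powr_iff[of "-(s+1)"] s by simp
  have f0: "\<And>k. 0 \<le> f k" unfolding f_def by simp
  have Lam0: "0 \<le> Lam"
  proof -
    have "p 0 \<in> V1 n" "p (2^n) \<in> V1 n" unfolding p_def N_def V1_def by auto
    moreover have "p 0 \<noteq> p (2^n)" unfolding p_def N_def by simp
    moreover have "\<bar>p 0 - p (2^n)\<bar> = 1" unfolding p_def N_def by simp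
    ultimately have "0 < j1 r n (p 0) (p (2^n)) \<and> j1 r n (p 0) (p (2^n)) \<le> Lam * 1"
      using up[of "p 0" "p (2^n)"] by simp
    then show ?thesis by linarith
  qed
  define T where "T = (\<lambda>i j. ((v (p i) - v (p j))^2 - (u (p i) - u (p j))^2) * j1 r n (p i) (p j)
       * mu1 n (p i) * mu1 n (p j))"
  have diff: "energy1 r n v - energy1 r n u = (\<Sum>i\<in>{0..2^n}. \<Sum>j\<in>{0..2^n}. T i j)"
    unfolding energy_reindex[of r n v] energy_reindex[of r n u] T_def p_def N_def
    by (simp only: sum_subtractf[symmetric]) (intro sum.cong refl, simp add: left_diff_distrib)
  have pV: "p i \<in> V1 n" if "i \<in> {0..2^n}" for i
    using that unfolding p_def N_def V1_def by auto
  have p01: "p i \<in> {0..1}" if "i \<in> {0..2^n}" for i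
    using that unfolding p_def N_def by (auto simp: field_simps)
  have Tb: "\<bar>T i j\<bar> \<le> C * f ((i - j) + (j - i))" if ij: "i \<in> {0..2^n}" "j \<in> {0..2^n}" for i j
  proof (cases "i = j")
    case True
    then show ?thesis unfolding T_def C_def f_def using N1 L0 by simp
  next
    case False
    define k where "k = (i - j) + (j - i)"
    have k1: "1 \<le> k" using False unfolding k_def by auto
    have "k \<le> 2^n" using ij unfolding k_def by auto
    then have kN: "real k \<le> N" unfolding N_def by (metis of_nat_le_iff of_nat_numeral of_nat_power)
    define d where "d = \<bar>p i - p j\<bar>"
    have dk: "d = real k / N" unfolding d_def p_def k_def using N1
      by (cases "i \<le> j") (auto simp: field_simps abs_if of_nat_diff)
    have d1: "1/N \<le> d" "d \<le> 1" using k1 kN N1 unfolding dk by (auto simp: field_simps)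
    have neq: "p i \<noteq> p j" using False N1 unfolding p_def by auto
    have ha: "\<bar>u (p i) - u (p j)\<bar> \<le> L * d"
      using lip p01[OF ij(1)] p01[OF ij(2)] unfolding lipschitz_on_def dist_real_def d_def by blast
    have avi: "\<bar>v (p i) - u (p i)\<bar> \<le> L / N" and avj: "\<bar>v (p j) - u (p j)\<bar> \<le> L / N"
      using avg_bound[OF lip p01[OF ij(1)], of n] avg_bound[OF lip p01[OF ij(2)], of n]
      unfolding v_def N_def by auto
    have hb: "\<bar>(v (p i) - v (p j)) - (u (p i) - u (p j))\<bar> \<le> 2*L/N"
      using avi avj by linarith
    have J: "0 < j1 r n (p i) (p j)" "j1 r n (p i) (p j) \<le> Lam * d powr (- 1 - 2 * s)"
      using up[OF pV[OF ij(1)] pV[OF ij(2)] neq] unfolding d_def by auto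
    have m: "0 \<le> mu1 n (p i)" "mu1 n (p i) \<le> 1/N" "0 \<le> mu1 n (p j)" "mu1 n (p j) \<le> 1/N"
      using mu1_ge mu1_le unfolding N_def by auto
    have tb: "\<bar>T i j\<bar> \<le> 8*L^2*Lam / N^3 * d powr (-(s+1))"
      unfolding T_def by (rule term_bound[OF L0 s N1 d1 ha hb J m])
    have de: "d powr (-(s+1)) = N powr (s+1) * f k"
    proof -
      have "(real k / N) powr (-(s+1)) = real k powr (-(s+1)) / N powr (-(s+1))" by (rule powr_divide)
      also have "N powr (-(s+1)) = inverse (N powr (s+1))" by (rule powr_minus)
      finally show ?thesis unfolding dk f_def by (simp add: divide_inverse)
    qed
    show ?thesis using tb unfolding de C_def k_def by (simp add: mult_ac)
  qed
  have "\<bar>energy1 r n v - energy1 r n u\<bar> \<le> (\<Sum>i\<in>{0..2^n}. \<Sum>j\<in>{0..2^n}. \<bar>T i j\<bar>)"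
    unfolding diff by (rule order_trans[OF sum_abs sum_mono]) (rule sum_abs)
  also have "\<dots> \<le> (\<Sum>i\<in>{0..2^n}. \<Sum>j\<in>{0..2^n}. C * f ((i - j) + (j - i)))"
    by (intro sum_mono Tb) auto
  also have "\<dots> = C * (\<Sum>i\<in>{0..2^n}. \<Sum>j\<in>{0..(2::nat)^n}. f ((i - j) + (j - i)))"
    by (simp add: sum_distrib_left)
  also have "\<dots> \<le> C * (\<Sum>i\<in>{0..(2::nat)^n}. 2 * suminf f)"
  proof -
    have "C \<ge> 0" unfolding C_def using Lam0 N1 by simp
    then show ?thesis by (intro mult_left_mono sum_mono row_sum[OF sf f0])
  qed
  also have "\<dots> = C * ((N + 1) * (2 * suminf f))" unfolding N_def by simp
  finally show ?thesis unfolding C_def v_def N_def f_def by simp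
qed

theorem lemma4p14:
  fixes r :: "nat \<Rightarrow> nat \<Rightarrow> real" and s :: real and u :: "real \<Rightarrow> real"
  assumes r_pos: "\<And>i k. i \<ge> 1 \<Longrightarrow> edge_ok i k \<Longrightarrow> r i k > 0"
    and r_sym: "\<And>i. r i 1 = r i 2"
    and s_range: "0 < s" "s < 1"
    and upper: "\<exists>Lam>0. \<forall>n x y. x \<in> V1 n \<longrightarrow> y \<in> V1 n \<longrightarrow> x \<noteq> y \<longrightarrow>
                   0 < j1 r n x y \<and> j1 r n x y \<le> Lam * (abs (x - y) powr (- 1 - 2 * s))"
    and lip: "\<exists>L. lipschitz_on L {0..1} u"
  shows "\<forall>l::real. ((\<lambda>n. energy1 r n (avg1 n u)) \<longlonglongrightarrow> l) \<longleftrightarrow> ((\<lambda>n. energy1 r n u) \<longlonglongrightarrow> l)"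
proof -
  obtain Lam where Lam: "Lam > 0" and up: "\<And>n x y. x \<in> V1 n \<Longrightarrow> y \<in> V1 n \<Longrightarrow> x \<noteq> y \<Longrightarrow>
                   0 < j1 r n x y \<and> j1 r n x y \<le> Lam * (abs (x - y) powr (- 1 - 2 * s))"
    using upper by blast
  obtain L where L: "lipschitz_on L {0..1} u" using lip by blast
  have L0: "0 \<le> L" using L by (simp add: lipschitz_on_def)
  define Z where "Z = suminf (\<lambda>k. real k powr (-(s+1)))"
  have Z0: "0 \<le> Z" unfolding Z_def
    using summable_real_powr_iff[of "-(s+1)"] s_range by (intro suminf_nonneg) auto
  define q :: real where "q = 2 powr (s - 1)"
  have q: "0 < q" "q < 1" unfolding q_def using s_range by (auto intro: powr_less_one)
  define K where "K = 32 * L^2 * Lam * Z"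
  have K0: "0 \<le> K" unfolding K_def using Lam Z0 by simp
  define dlt where "dlt = (\<lambda>n. energy1 r n (avg1 n u) - energy1 r n u)"
  have bnd: "norm (dlt n) \<le> K * q^n" for n
  proof -
    define N :: real where "N = 2^n"
    have N1: "1 \<le> N" unfolding N_def by simp
    have "\<bar>dlt n\<bar> \<le> 8*L^2*Lam / N^3 * N powr (s+1) * ((N + 1) * (2 * Z))"
      unfolding dlt_def N_def Z_def by (rule diff_bound[OF L s_range up]) auto
    also have "N powr (s+1) = q^n * N^2"
    proof -
      have "N powr (s+1) = N powr (s - 1) * N powr 2" by (simp add: add.commute flip: powr_add)
      also have "N powr 2 = N^2" using N1 by simp
      also have "N powr (s - 1) = q^n"
      proof -
        have "N = 2 powr (real n)" unfolding N_def by (simp add: powr_realpow)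
        then have "N powr (s - 1) = 2 powr (real n * (s - 1))" by (simp add: powr_powr)
        also have "\<dots> = q^n" unfolding q_def by (simp add: powr_power)
        finally show ?thesis .
      qed
      finally show ?thesis .
    qed
    also have "8*L^2*Lam / N^3 * (q^n * N^2) * ((N + 1) * (2 * Z)) = 16*L^2*Lam*Z * q^n * ((N + 1) / N)"
      using N1 by (simp add: field_simps power2_eq_square power3_eq_cube)
    also have "\<dots> \<le> 16*L^2*Lam*Z * q^n * 2"
      using N1 q Lam Z0 by (intro mult_left_mono) (auto simp: field_simps)
    finally show ?thesis unfolding K_def by (simp add: mult_ac)
  qed
  have d0: "dlt \<longlonglongrightarrow> 0"
  proof (rule Lim_null_comparison)
    show "\<forall>\<^sub>F n in sequentially. norm (dlt n) \<le> K * q^n" using bnd by simp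
    show "(\<lambda>n. K * q^n) \<longlonglongrightarrow> 0" using q by (intro tendsto_mult_right_zero LIMSEQ_power_zero) simp
  qed
  show ?thesis
  proof (intro allI iffI)
    fix l assume "(\<lambda>n. energy1 r n (avg1 n u)) \<longlonglongrightarrow> l"
    from tendsto_diff[OF this d0] show "(\<lambda>n. energy1 r n u) \<longlonglongrightarrow> l" by (simp add: dlt_def)
  next
    fix l assume "(\<lambda>n. energy1 r n u) \<longlonglongrightarrow> l"
    from tendsto_add[OF this d0] show "(\<lambda>n. energy1 r n (avg1 n u)) \<longlonglongrightarrow> l" by (simp add: dlt_def)
  qed
qed

end
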